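(* Let $k\ge2$, $\ell\ge1$, and start with $k^\ell$ labeled chips on the root of the infinite rooted directed $k$-ary tree. Consider any stable configuration reached by labeled chip-firing. Let $v$ be any vertex on a layer $t$ with $1\le t\le \ell+1$, and let $S$ be the set of chips which, in the stable configuration, lie in the subtree rooted at $v$. Then the smallest chip of $S$ lies on the bottom straight left descendant of $v$ and the largest chip of $S$ lies on the bottom straight right descendant of $v$.
   Context: The infinite rooted directed $k$-ary tree: every vertex has $k$ children ordered left to right, edges directed from parent to child; the root is on layer $1$, children of a layer-$t$ vertex are on layer $t+1$. Labeled chip-firing: a vertex with at least $k$ chips may fire by choosing any $k$ of its chips and sending the $i$-th smallest label among them to its $i$-th leftmost child; a configuration is stable when no vertex has $\ge k$ chips. With $k^\ell$ chips initially at the root, every stable configuration has exactly one chip on each vertex of layer $\ell+1$ and no other chips. The bottom straight left (resp. right) descendant of a vertex $v$ on layer $t\le \ell+1$ is the unique vertex on layer $\ell+1$ reached from $v$ by repeatedly moving to the leftmost (resp. rightmost) child (it is $v$ itself if $t=\ell+1$). *)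

theory Defs
  imports Main "HOL-Library.Sublist"
begin

text \<open>Vertices of the infinite k-ary tree are encoded as lists of child indices
(the path from the root); the root is [] (layer 1), a vertex v lies on layer
length v + 1, and its i-th leftmost child (i = 0..k-1) is v @ [i].
Chips are labelled by natural numbers; a configuration assigns to each vertex
the set of labels of the chips on it.\<close>

type_synonym vertex = "nat list"
type_synonym config = "vertex \<Rightarrow> nat set"

definition in_tree :: "nat \<Rightarrow> vertex \<Rightarrow> bool" where
  "in_tree k v \<longleftrightarrow> (\<forall>i\<in>set v. i < k)"

definition fire :: "nat \<Rightarrow> vertex \<Rightarrow> nat set \<Rightarrow> config \<Rightarrow> config" where
  "fire k v A C = (\<lambda>w.
     if w = v then C v - A
     else if (\<exists>i<k. w = v @ [i]) then C w \<union> {sorted_list_of_set A ! last w}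
     else C w)"

definition fire_step :: "nat \<Rightarrow> config \<Rightarrow> config \<Rightarrow> bool" where
  "fire_step k C C' \<longleftrightarrow>
     (\<exists>v A. in_tree k v \<and> A \<subseteq> C v \<and> card A = k \<and> C' = fire k v A C)"

definition stable :: "nat \<Rightarrow> config \<Rightarrow> bool" where
  "stable k C \<longleftrightarrow> (\<forall>v. card (C v) < k)"

definition init_config :: "nat \<Rightarrow> nat \<Rightarrow> config" where
  "init_config k l = (\<lambda>v. if v = [] then {1..k ^ l} else {})"

definition subtree_chips :: "config \<Rightarrow> vertex \<Rightarrow> nat set" where
  "subtree_chips C v = (\<Union>w\<in>{w. prefix v w}. C w)"

definition bottom_left :: "nat \<Rightarrow> vertex \<Rightarrow> vertex" where
  "bottom_left l v = v @ replicate (l - length v) 0"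

definition bottom_right :: "nat \<Rightarrow> nat \<Rightarrow> vertex \<Rightarrow> vertex" where
  "bottom_right k l v = v @ replicate (l - length v) (k - 1)"

end

theory Submission
  imports Defs
begin

lemma sub_mem: "x \<in> subtree_chips C u \<longleftrightarrow> (\<exists>w. prefix u w \<and> x \<in> C w)"
  by (simp add: subtree_chips_def)

lemma sub_mono: "prefix u u' \<Longrightarrow> subtree_chips C u' \<subseteq> subtree_chips C u"
proof
  fix x assume p: "prefix u u'" and "x \<in> subtree_chips C u'"
  then obtain w where w: "prefix u' w" "x \<in> C w" unfolding sub_mem by blast
  have "prefix u w" using prefix_order.trans[OF p w(1)] .
  then show "x \<in> subtree_chips C u" using w(2) unfolding sub_mem by blast
qed

lemma in_tree_snoc[simp]: "in_tree k (v @ [i]) \<longleftrightarrow> in_tree k v \<and> i < k"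
  by (simp add: in_tree_def conj_commute)

lemma Lfacts:
  assumes "card A = k" "k > 0"
  shows "finite A" "length (sorted_list_of_set A) = k" "set (sorted_list_of_set A) = A"
    "distinct (sorted_list_of_set A)" "sorted (sorted_list_of_set A)"
proof -
  show f: "finite A" using assms by (metis card.infinite less_irrefl)
  show "length (sorted_list_of_set A) = k" using f assms(1) by simp
  show "set (sorted_list_of_set A) = A" using f by simp
  show "distinct (sorted_list_of_set A)" by simp
  show "sorted (sorted_list_of_set A)" by simp
qed

lemma fire_mem:
  assumes "card A = k" "k > 0"
  shows "x \<in> fire k v A C w \<longleftrightarrow>
    (x \<in> C w \<and> (w = v \<longrightarrow> x \<notin> A)) \<or> (\<exists>i<k. w = v @ [i] \<and> x = sorted_list_of_set A ! i)"
  unfolding fire_def by auto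

lemma fire_sub_other:
  assumes "A \<subseteq> C v" "card A = k" "k > 0" "\<not>(\<exists>i<k. u = v @ [i])"
  shows "subtree_chips (fire k v A C) u = subtree_chips C u"
proof
  let ?L = "sorted_list_of_set A"
  show "subtree_chips (fire k v A C) u \<subseteq> subtree_chips C u"
  proof
    fix x assume "x \<in> subtree_chips (fire k v A C) u"
    then obtain w where w: "prefix u w" "x \<in> fire k v A C w" unfolding sub_mem by blast
    show "x \<in> subtree_chips C u"
    proof (cases "x \<in> C w")
      case True then show ?thesis using w unfolding sub_mem by blast
    next
      case False
      have "\<exists>i<k. w = v @ [i] \<and> x = ?L ! i" using w(2) False fire_mem[OF assms(2,3)] by simp
      then obtain i where i: "i < k" "w = v @ [i]" "x = ?L ! i" by blast
      have "x \<in> set ?L" using i Lfacts(2)[OF assms(2,3)] by simp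
      then have "x \<in> A" using Lfacts(3)[OF assms(2,3)] by simp
      hence "x \<in> C v" using assms(1) by blast
      moreover have "prefix u v" using w(1) i assms(4) by auto
      ultimately show ?thesis unfolding sub_mem by blast
    qed
  qed
  show "subtree_chips C u \<subseteq> subtree_chips (fire k v A C) u"
  proof
    fix x assume "x \<in> subtree_chips C u"
    then obtain w where w: "prefix u w" "x \<in> C w" unfolding sub_mem by blast
    show "x \<in> subtree_chips (fire k v A C) u"
    proof (cases "w = v \<and> x \<in> A")
      case False
      then have "x \<in> fire k v A C w" using w(2) fire_mem[OF assms(2,3)] by simp
      then show ?thesis using w unfolding sub_mem by blast
    next
      case True
      then have "x \<in> set ?L" using Lfacts(3)[OF assms(2,3)] by simp
      then obtain i where i: "i < length ?L" "?L ! i = x" by (auto simp: in_set_conv_nth)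
      have "i < k" using i Lfacts[OF assms(2,3)] by simp
      then have "x \<in> fire k v A C (v @ [i])" using i fire_mem[OF assms(2,3)] by auto
      moreover have "prefix u (v @ [i])" using w True by simp
      ultimately show ?thesis unfolding sub_mem by blast
    qed
  qed
qed

lemma fire_sub_child:
  assumes "A \<subseteq> C v" "card A = k" "k > 0" "i < k"
  shows "subtree_chips (fire k v A C) (v @ [i]) = insert (sorted_list_of_set A ! i) (subtree_chips C (v @ [i]))"
proof -
  have nv: "\<not> prefix (v @ [i]) v" using prefix_length_le by fastforce
  have ch: "prefix (v @ [i]) (v @ [j]) \<Longrightarrow> j = i" for j by (auto simp: prefix_def)
  show ?thesis
  proof (intro equalityI subsetI)
    fix x assume "x \<in> subtree_chips (fire k v A C) (v @ [i])"
    then obtain w where w: "prefix (v @ [i]) w" "x \<in> fire k v A C w" unfolding sub_mem by blast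
    then have "x \<in> C w \<or> (\<exists>j<k. w = v @ [j] \<and> x = sorted_list_of_set A ! j)"
      using fire_mem[OF assms(2,3)] by blast
    then show "x \<in> insert (sorted_list_of_set A ! i) (subtree_chips C (v @ [i]))"
    proof
      assume "x \<in> C w" then show ?thesis using w(1) by (auto simp: sub_mem)
    next
      assume "\<exists>j<k. w = v @ [j] \<and> x = sorted_list_of_set A ! j"
      then obtain j where "w = v @ [j]" "x = sorted_list_of_set A ! j" by blast
      then show ?thesis using w(1) ch by simp
    qed
  next
    fix x assume "x \<in> insert (sorted_list_of_set A ! i) (subtree_chips C (v @ [i]))"
    then show "x \<in> subtree_chips (fire k v A C) (v @ [i])"
    proof
      assume "x = sorted_list_of_set A ! i"
      then have "x \<in> fire k v A C (v @ [i])" using fire_mem[OF assms(2,3)] assms(4) by blast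
      then show ?thesis unfolding sub_mem by blast
    next
      assume "x \<in> subtree_chips C (v @ [i])"
      then obtain w where w: "prefix (v @ [i]) w" "x \<in> C w" unfolding sub_mem by blast
      then have "w \<noteq> v" using nv by blast
      then have "x \<in> fire k v A C w" using w fire_mem[OF assms(2,3)] by blast
      then show ?thesis using w unfolding sub_mem by blast
    qed
  qed
qed

definition Inv :: "nat \<Rightarrow> nat \<Rightarrow> config \<Rightarrow> bool" where
 "Inv k l C \<longleftrightarrow>
 subtree_chips C [] = {1..k^l} \<and>
 (\<forall>w. \<not> in_tree k w \<longrightarrow> C w = {}) \<and>
 (\<forall>x w w'. x \<in> C w \<longrightarrow> x \<in> C w' \<longrightarrow> w = w') \<and>
 (\<forall>w i j. in_tree k w \<longrightarrow> i<k \<longrightarrow> j<k \<longrightarrow> card (subtree_chips C (w@[i])) = card (subtree_chips C (w@[j]))) \<and>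
 (\<forall>w i. in_tree k w \<longrightarrow> i<k \<longrightarrow> (\<forall>x\<in>subtree_chips C (w@[i]). \<exists>y\<in>subtree_chips C (w@[0]). y \<le> x)) \<and>
 (\<forall>w i. in_tree k w \<longrightarrow> i<k \<longrightarrow> (\<forall>x\<in>subtree_chips C (w@[i]). \<exists>y\<in>subtree_chips C (w@[k-1]). x \<le> y))"

lemma InvD:
  assumes "Inv k l C"
  shows "subtree_chips C [] = {1..k^l}"
    "\<forall>w. \<not> in_tree k w \<longrightarrow> C w = {}"
    "\<forall>x w w'. x \<in> C w \<longrightarrow> x \<in> C w' \<longrightarrow> w = w'"
    "\<forall>w i j. in_tree k w \<longrightarrow> i<k \<longrightarrow> j<k \<longrightarrow> card (subtree_chips C (w@[i])) = card (subtree_chips C (w@[j]))"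
    "\<forall>w i. in_tree k w \<longrightarrow> i<k \<longrightarrow> (\<forall>x\<in>subtree_chips C (w@[i]). \<exists>y\<in>subtree_chips C (w@[0]). y \<le> x)"
    "\<forall>w i. in_tree k w \<longrightarrow> i<k \<longrightarrow> (\<forall>x\<in>subtree_chips C (w@[i]). \<exists>y\<in>subtree_chips C (w@[k-1]). x \<le> y)"
  using assms unfolding Inv_def apply - apply (elim conjE, assumption)+ done

lemma Inv_finite: "Inv k l C \<Longrightarrow> finite (subtree_chips C u)"
proof -
  assume "Inv k l C"
  then have "subtree_chips C [] = {1..k^l}" by (rule InvD)
  moreover have "subtree_chips C u \<subseteq> subtree_chips C []" by (rule sub_mono) simp
  ultimately show ?thesis by (metis finite_atLeastAtMost finite_subset)
qed

lemma Inv_init: "Inv k l (init_config k l)"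
proof -
  have e: "subtree_chips (init_config k l) (w @ [i]) = {}" for w i
  proof -
    have "x \<notin> subtree_chips (init_config k l) (w @ [i])" for x
    proof
      assume "x \<in> subtree_chips (init_config k l) (w @ [i])"
      then obtain w' where w': "prefix (w @ [i]) w'" "x \<in> init_config k l w'" unfolding sub_mem by blast
      then have "w' = []" by (simp add: init_config_def split: if_splits)
      then show False using w' by simp
    qed
    then show ?thesis by blast
  qed
  have r: "subtree_chips (init_config k l) [] = {1..k^l}"
  proof (intro equalityI subsetI)
    fix x assume "x \<in> subtree_chips (init_config k l) []"
    then obtain w' where w': "x \<in> init_config k l w'" unfolding sub_mem by blast
    then show "x \<in> {1..k^l}" by (simp add: init_config_def split: if_splits)
  next
    fix x assume "x \<in> {1..k^l}"
    then have "x \<in> init_config k l []" by (simp add: init_config_def)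
    then show "x \<in> subtree_chips (init_config k l) []" unfolding sub_mem by blast
  qed
  have t: "\<not> in_tree k w \<Longrightarrow> init_config k l w = {}" for w
    by (cases "w = []") (simp_all add: init_config_def in_tree_def)
  have d: "x \<in> init_config k l w \<Longrightarrow> x \<in> init_config k l w' \<Longrightarrow> w = w'" for x w w'
    by (simp add: init_config_def split: if_splits)
  have 4: "\<forall>w i j. in_tree k w \<longrightarrow> i<k \<longrightarrow> j<k \<longrightarrow> card (subtree_chips (init_config k l) (w@[i])) = card (subtree_chips (init_config k l) (w@[j]))"
    using e by simp
  have 5: "\<forall>w i. in_tree k w \<longrightarrow> i<k \<longrightarrow> (\<forall>x\<in>subtree_chips (init_config k l) (w@[i]). \<exists>y\<in>subtree_chips (init_config k l) (w@[0]). y \<le> x)"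
    using e by simp
  have 6: "\<forall>w i. in_tree k w \<longrightarrow> i<k \<longrightarrow> (\<forall>x\<in>subtree_chips (init_config k l) (w@[i]). \<exists>y\<in>subtree_chips (init_config k l) (w@[k-1]). x \<le> y)"
    using e by simp
  show ?thesis unfolding Inv_def
    apply (intro conjI)
    subgoal by (rule r)
    subgoal using t by blast
    subgoal using d by blast
    subgoal by (rule 4)
    subgoal by (rule 5)
    subgoal by (rule 6)
    done
qed

lemma Inv_step:
  assumes inv: "Inv k l C" and k: "k \<ge> 2" and v: "in_tree k v" and A: "A \<subseteq> C v" "card A = k"
  shows "Inv k l (fire k v A C)"
proof -
  let ?L = "sorted_list_of_set A"
  let ?C = "fire k v A C"
  have k0: "k > 0" using k by simp
  note LF = Lfacts[OF A(2) k0]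
  note FM = fire_mem[OF A(2) k0]
  have LA: "i < k \<Longrightarrow> ?L ! i \<in> A" for i using LF nth_mem by metis
  have Lmono: "i \<le> j \<Longrightarrow> j < k \<Longrightarrow> ?L ! i \<le> ?L ! j" for i j
    using LF sorted_nth_mono by metis
  have Linj: "i < k \<Longrightarrow> j < k \<Longrightarrow> ?L ! i = ?L ! j \<Longrightarrow> i = j" for i j
    using LF nth_eq_iff_index_eq by metis
  have I1: "subtree_chips C [] = {1..k^l}"
    and I2: "\<forall>w. \<not> in_tree k w \<longrightarrow> C w = {}"
    and I3: "\<forall>x w w'. x \<in> C w \<longrightarrow> x \<in> C w' \<longrightarrow> w = w'"
    and I4: "\<forall>w i j. in_tree k w \<longrightarrow> i<k \<longrightarrow> j<k \<longrightarrow> card (subtree_chips C (w@[i])) = card (subtree_chips C (w@[j]))"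
    and I5: "\<forall>w i. in_tree k w \<longrightarrow> i<k \<longrightarrow> (\<forall>x\<in>subtree_chips C (w@[i]). \<exists>y\<in>subtree_chips C (w@[0]). y \<le> x)"
    and I6: "\<forall>w i. in_tree k w \<longrightarrow> i<k \<longrightarrow> (\<forall>x\<in>subtree_chips C (w@[i]). \<exists>y\<in>subtree_chips C (w@[k-1]). x \<le> y)"
    by (rule InvD[OF inv])+
  have S1: "subtree_chips ?C [] = {1..k^l}"
    using fire_sub_other[of A C v k, OF A k0, of "[]"] I1 by simp
  have S2: "\<forall>w. \<not> in_tree k w \<longrightarrow> ?C w = {}"
  proof (intro allI impI)
    fix w assume "\<not> in_tree k w"
    then have "w \<noteq> v" "\<not>(\<exists>i<k. w = v @ [i])" using v by auto
    then show "?C w = {}" using I2 \<open>\<not> in_tree k w\<close> unfolding fire_def by auto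
  qed
  have S3: "\<forall>x w w'. x \<in> ?C w \<longrightarrow> x \<in> ?C w' \<longrightarrow> w = w'"
  proof (intro allI impI)
    fix x w w' assume a: "x \<in> ?C w" "x \<in> ?C w'"
    have AC: "y \<in> A \<Longrightarrow> y \<in> C v" for y using A by blast
    from a(1) have h1: "(x \<in> C w \<and> (w = v \<longrightarrow> x \<notin> A)) \<or> (\<exists>i<k. w = v @ [i] \<and> x = ?L ! i)" using FM by blast
    from a(2) have h2: "(x \<in> C w' \<and> (w' = v \<longrightarrow> x \<notin> A)) \<or> (\<exists>i<k. w' = v @ [i] \<and> x = ?L ! i)" using FM by blast
    have c1: "w = w'" if "x \<in> C w" "w = v \<longrightarrow> x \<notin> A" "j < k" "w' = v @ [j]" "x = ?L ! j" for w w' j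
    proof -
      have "x \<in> C v" using that LA AC by blast
      then have "w = v" using I3 that(1) by blast
      then show ?thesis using that LA by blast
    qed
    show "w = w'"
    proof (cases "\<exists>i<k. w = v @ [i] \<and> x = ?L ! i")
      case True
      then obtain i where i: "i < k" "w = v @ [i]" "x = ?L ! i" by blast
      show ?thesis
      proof (cases "\<exists>i<k. w' = v @ [i] \<and> x = ?L ! i")
        case True
        then obtain j where "j < k" "w' = v @ [j]" "x = ?L ! j" by blast
        then show ?thesis using i Linj by simp
      next
        case False
        then have b: "x \<in> C w'" "w' = v \<longrightarrow> x \<notin> A" using h2 by blast+
        show ?thesis using c1[OF b(1) b(2) i(1) i(2) i(3)] by simp
      qed
    next
      case False
      then have a1: "x \<in> C w" "w = v \<longrightarrow> x \<notin> A" using h1 by blast+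
      show ?thesis
      proof (cases "\<exists>i<k. w' = v @ [i] \<and> x = ?L ! i")
        case True
        then obtain j where "j < k" "w' = v @ [j]" "x = ?L ! j" by blast
        then have "j < k" "w' = v @ [j]" "x = ?L ! j" by blast+
        then show ?thesis using c1[OF a1(1) a1(2)] by blast
      next
        case False
        then show ?thesis using h2 a1 I3 by blast
      qed
    qed
  qed
  have childcase: "subtree_chips ?C (w@[i]) = subtree_chips C (w@[i])" if "w \<noteq> v" for w i
  proof -
    have "\<not>(\<exists>j<k. w @ [i] = v @ [j])" using that by simp
    then show ?thesis by (rule fire_sub_other[of A C v k, OF A k0])
  qed
  have newnot: "?L ! i \<notin> subtree_chips C (v @ [i])" if "i < k" for i
  proof
    assume "?L ! i \<in> subtree_chips C (v @ [i])"
    then obtain w where w: "prefix (v @ [i]) w" "?L ! i \<in> C w" unfolding sub_mem by blast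
    have "?L ! i \<in> C v" using LA A that by blast
    then have "w = v" using I3 w(2) by blast
    then have "length (v @ [i]) \<le> length v" using w(1) prefix_length_le by blast
    then show False by simp
  qed
  have cardc: "card (subtree_chips ?C (v@[i])) = Suc (card (subtree_chips C (v@[i])))" if "i < k" for i
  proof -
    have "subtree_chips ?C (v@[i]) = insert (?L!i) (subtree_chips C (v@[i]))"
      by (rule fire_sub_child[of A C v k, OF A k0 that])
    moreover have "finite (subtree_chips C (v@[i]))" by (rule Inv_finite[OF inv])
    ultimately show ?thesis using newnot[OF that] by simp
  qed
  have S4: "\<forall>w i j. in_tree k w \<longrightarrow> i<k \<longrightarrow> j<k \<longrightarrow> card (subtree_chips ?C (w@[i])) = card (subtree_chips ?C (w@[j]))"
  proof (intro allI impI)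
    fix w i j assume h: "in_tree k w" "i < k" "j < k"
    have old: "card (subtree_chips C (w@[i])) = card (subtree_chips C (w@[j]))" using I4 h by blast
    show "card (subtree_chips ?C (w@[i])) = card (subtree_chips ?C (w@[j]))"
    proof (cases "w = v")
      case True
      then show ?thesis using cardc[OF h(2)] cardc[OF h(3)] old by simp
    next
      case False then show ?thesis using childcase[OF False, of i] childcase[OF False, of j] old by simp
    qed
  qed
  have k1: "k - 1 < k" using k0 by simp
  have S5: "\<forall>w i. in_tree k w \<longrightarrow> i<k \<longrightarrow> (\<forall>x\<in>subtree_chips ?C (w@[i]). \<exists>y\<in>subtree_chips ?C (w@[0]). y \<le> x)"
  proof (intro allI impI ballI)
    fix w i x assume h: "in_tree k w" "i < k" and x: "x \<in> subtree_chips ?C (w@[i])"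
    have old: "\<forall>x\<in>subtree_chips C (w@[i]). \<exists>y\<in>subtree_chips C (w@[0]). y \<le> x" using I5 h by blast
    show "\<exists>y\<in>subtree_chips ?C (w@[0]). y \<le> x"
    proof (cases "w = v")
      case True
      have e1: "subtree_chips ?C (v@[i]) = insert (?L!i) (subtree_chips C (v@[i]))"
        by (rule fire_sub_child[of A C v k, OF A k0 h(2)])
      have e0: "subtree_chips ?C (v@[0]) = insert (?L!0) (subtree_chips C (v@[0]))"
        by (rule fire_sub_child[of A C v k, OF A k0 k0])
      have m: "?L!0 \<le> ?L!i" using Lmono[of 0 i] h(2) by simp
      show ?thesis
      proof (cases "x = ?L!i")
        case True
        then show ?thesis using m \<open>w = v\<close> e0 by auto
      next
        case False
        then have "x \<in> subtree_chips C (w@[i])" using x e1 \<open>w = v\<close> by simp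
        then obtain y where "y \<in> subtree_chips C (w@[0])" "y \<le> x" using old by blast
        then show ?thesis using e0 \<open>w = v\<close> by auto
      qed
    next
      case False
      then show ?thesis using childcase[OF False, of i] childcase[OF False, of 0] old x by simp
    qed
  qed
  have S6: "\<forall>w i. in_tree k w \<longrightarrow> i<k \<longrightarrow> (\<forall>x\<in>subtree_chips ?C (w@[i]). \<exists>y\<in>subtree_chips ?C (w@[k-1]). x \<le> y)"
  proof (intro allI impI ballI)
    fix w i x assume h: "in_tree k w" "i < k" and x: "x \<in> subtree_chips ?C (w@[i])"
    have old: "\<forall>x\<in>subtree_chips C (w@[i]). \<exists>y\<in>subtree_chips C (w@[k-1]). x \<le> y" using I6 h by blast
    show "\<exists>y\<in>subtree_chips ?C (w@[k-1]). x \<le> y"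
    proof (cases "w = v")
      case True
      have e1: "subtree_chips ?C (v@[i]) = insert (?L!i) (subtree_chips C (v@[i]))"
        by (rule fire_sub_child[of A C v k, OF A k0 h(2)])
      have e0: "subtree_chips ?C (v@[k-1]) = insert (?L!(k-1)) (subtree_chips C (v@[k-1]))"
        by (rule fire_sub_child[of A C v k, OF A k0 k1])
      have m: "?L!i \<le> ?L!(k-1)" using Lmono[of i "k-1"] h(2) k1 by simp
      show ?thesis
      proof (cases "x = ?L!i")
        case True
        then show ?thesis using m \<open>w = v\<close> e0 by auto
      next
        case False
        then have "x \<in> subtree_chips C (w@[i])" using x e1 \<open>w = v\<close> by simp
        then obtain y where "y \<in> subtree_chips C (w@[k-1])" "x \<le> y" using old by blast
        then show ?thesis using e0 \<open>w = v\<close> by auto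
      qed
    next
      case False
      then show ?thesis using childcase[OF False, of i] childcase[OF False, of "k-1"] old x by simp
    qed
  qed
  show ?thesis unfolding Inv_def
    apply (intro conjI)
    subgoal by (rule S1)
    subgoal by (rule S2)
    subgoal by (rule S3)
    subgoal by (rule S4)
    subgoal by (rule S5)
    subgoal by (rule S6)
    done
qed

lemma Inv_reach:
  assumes "k \<ge> 2" "(fire_step k)\<^sup>*\<^sup>* (init_config k l) C"
  shows "Inv k l C"
  using assms(2)
proof (induction rule: rtranclp_induct)
  case base then show ?case by (rule Inv_init)
next
  case (step y z)
  from step(2) obtain v A where "in_tree k v" "A \<subseteq> y v" "card A = k" "z = fire k v A y"
    unfolding fire_step_def by blast
  then show ?case using Inv_step[OF step(3) assms(1)] by simp
qed

lemma decomp: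
  assumes inv: "Inv k l C" and w: "in_tree k w"
  shows "subtree_chips C w = C w \<union> (\<Union>i<k. subtree_chips C (w@[i]))"
proof (intro equalityI subsetI)
  fix x assume "x \<in> subtree_chips C w"
  then obtain u where u: "prefix w u" "x \<in> C u" unfolding sub_mem by blast
  show "x \<in> C w \<union> (\<Union>i<k. subtree_chips C (w@[i]))"
  proof (cases "u = w")
    case True then show ?thesis using u by simp
  next
    case False
    obtain zs where zs: "u = w @ zs" using u(1) by (rule prefixE)
    obtain j r where jr: "zs = j # r" using False zs by (cases zs) auto
    have "C u \<noteq> {}" using u by blast
    then have "in_tree k u" using InvD(2)[OF inv] by blast
    then have "j < k" using zs jr by (simp add: in_tree_def)
    moreover have "prefix (w @ [j]) u" using zs jr by (intro prefixI[of _ _ r]) simp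
    ultimately have "j < k" "x \<in> subtree_chips C (w@[j])" using u(2) unfolding sub_mem by blast+
    then show ?thesis by blast
  qed
next
  fix x assume "x \<in> C w \<union> (\<Union>i<k. subtree_chips C (w@[i]))"
  then show "x \<in> subtree_chips C w"
  proof
    assume "x \<in> C w" then show ?thesis unfolding sub_mem by blast
  next
    assume "x \<in> (\<Union>i<k. subtree_chips C (w@[i]))"
    then obtain i where "x \<in> subtree_chips C (w@[i])" by blast
    moreover have "subtree_chips C (w@[i]) \<subseteq> subtree_chips C w" by (rule sub_mono) simp
    ultimately show ?thesis by blast
  qed
qed

lemma card_decomp:
  assumes inv: "Inv k l C" and w: "in_tree k w" and k0: "k > 0"
  shows "card (subtree_chips C w) = card (C w) + k * card (subtree_chips C (w@[0]))"
proof -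
  have fin: "finite (subtree_chips C u)" for u by (rule Inv_finite[OF inv])
  have fC: "finite (C w)"
  proof -
    have "C w \<subseteq> subtree_chips C w" using sub_mem[of _ C w] by blast
    then show ?thesis using fin finite_subset by blast
  qed
  have dis1: "C w \<inter> (\<Union>i<k. subtree_chips C (w@[i])) = {}"
  proof -
    have "x \<notin> subtree_chips C (w@[i])" if "x \<in> C w" for x i
    proof
      assume "x \<in> subtree_chips C (w@[i])"
      then obtain u where u: "prefix (w@[i]) u" "x \<in> C u" unfolding sub_mem by blast
      then have "u = w" using InvD(3)[OF inv] that by blast
      then have "length (w@[i]) \<le> length w" using u(1) prefix_length_le by blast
      then show False by simp
    qed
    then show ?thesis by blast
  qed
  have dis2: "\<forall>i\<in>{..<k}. \<forall>j\<in>{..<k}. i \<noteq> j \<longrightarrow> subtree_chips C (w@[i]) \<inter> subtree_chips C (w@[j]) = {}"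
  proof (intro ballI impI)
    fix i j :: nat assume "i \<noteq> j"
    have "x \<notin> subtree_chips C (w@[j])" if xi: "x \<in> subtree_chips C (w@[i])" for x
    proof
      assume "x \<in> subtree_chips C (w@[j])"
      then obtain u' where u': "prefix (w@[j]) u'" "x \<in> C u'" unfolding sub_mem by blast
      obtain u where u: "prefix (w@[i]) u" "x \<in> C u" using xi unfolding sub_mem by blast
      have "u = u'" using InvD(3)[OF inv] u(2) u'(2) by blast
      then have "prefix (w@[i]) (w@[j]) \<or> prefix (w@[j]) (w@[i])" using u(1) u'(1) prefix_same_cases by blast
      moreover have "prefix (w@[a]) (w@[b]) \<Longrightarrow> a = b" for a b :: nat
      proof -
        assume "prefix (w@[a]) (w@[b])"
        then obtain zs where "w@[b] = (w@[a])@zs" by (rule prefixE)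
        then have "zs = []" "a = b" by (cases zs; simp)+
        then show "a = b" by simp
      qed
      ultimately have "i = j" by blast
      then show False using \<open>i \<noteq> j\<close> by simp
    qed
    then show "subtree_chips C (w@[i]) \<inter> subtree_chips C (w@[j]) = {}" by blast
  qed
  have finI: "\<forall>i\<in>{..<k}. finite (subtree_chips C (w@[i]))" using fin by blast
  have finU: "finite (\<Union>i<k. subtree_chips C (w@[i]))" by (rule finite_UN_I[OF finite_lessThan]) (rule fin)
  have "card (subtree_chips C w) = card (C w \<union> (\<Union>i<k. subtree_chips C (w@[i])))"
    using decomp[OF inv w] by (rule arg_cong)
  also have "\<dots> = card (C w) + card (\<Union>i<k. subtree_chips C (w@[i]))"
    by (rule card_Un_disjoint[OF fC finU dis1])
  also have "card (\<Union>i<k. subtree_chips C (w@[i])) = (\<Sum>i<k. card (subtree_chips C (w@[i])))"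
    by (rule card_UN_disjoint[OF finite_lessThan finI dis2])
  also have "\<dots> = (\<Sum>i<k. card (subtree_chips C (w@[0])))"
  proof (rule sum.cong[OF refl])
    fix i assume "i \<in> {..<k}"
    then show "card (subtree_chips C (w@[i])) = card (subtree_chips C (w@[0]))"
      using InvD(4)[OF inv] w k0 by blast
  qed
  finally show ?thesis by simp
qed

lemma arith_aux: "0 < (k::nat) \<Longrightarrow> c < k \<Longrightarrow> k * P = c + k * s \<Longrightarrow> c = 0 \<and> s = P"
proof -
  assume a: "0 < k" "c < k" "k * P = c + k * s"
  have "(k * P) mod k = 0" by simp
  moreover have "(c + k * s) mod k = c" using a(2) by simp
  ultimately have "c = 0" using a(3) by simp
  then show ?thesis using a by simp
qed

lemma card_pow:
  assumes inv: "Inv k l C" and st: "stable k C" and k: "k \<ge> 2"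
  shows "in_tree k w \<Longrightarrow> length w \<le> l \<Longrightarrow> card (subtree_chips C w) = k ^ (l - length w)"
proof (induction w rule: rev_induct)
  case Nil
  then show ?case using InvD(1)[OF inv] by simp
next
  case (snoc i w)
  have w: "in_tree k w" "i < k" "length w < l" using snoc.prems by auto
  have k0: "k > 0" using k by simp
  have IH: "card (subtree_chips C w) = k ^ (l - length w)" using snoc.IH w by simp
  have pw: "k ^ (l - length w) = k * k ^ (l - length w - 1)"
    using w(3) by (metis Suc_diff_Suc diff_Suc_1 power_Suc zero_less_diff)
  have "card (C w) < k" using st unfolding stable_def by blast
  then have "card (subtree_chips C (w@[0])) = k ^ (l - length w - 1)"
    using arith_aux[OF k0, of "card (C w)"] card_decomp[OF inv w(1) k0] IH pw by metis
  moreover have "card (subtree_chips C (w@[i])) = card (subtree_chips C (w@[0]))"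
    using InvD(4)[OF inv] w k0 by blast
  ultimately show ?case by simp
qed

lemma min_bl:
  assumes inv: "Inv k l C" and st: "stable k C" and k: "k \<ge> 2"
  shows "\<forall>w. in_tree k w \<longrightarrow> l - length w = n \<longrightarrow> length w \<le> l \<longrightarrow>
    Min (subtree_chips C w) \<in> C (bottom_left l w) \<and> Max (subtree_chips C w) \<in> C (bottom_right k l w)"
proof (induction n)
  case 0
  show ?case
  proof (intro allI impI)
    fix w assume w: "in_tree k w" "l - length w = 0" "length w \<le> l"
    have k0: "k > 0" using k by simp
    have len: "length w = l" using w by simp
    have c1: "card (subtree_chips C w) = 1" using card_pow[OF inv st k w(1) w(3)] len by simp
    have "card (C w) < k" using st unfolding stable_def by blast
    have "1 = card (C w) + k * card (subtree_chips C (w@[0]))" using c1 card_decomp[OF inv w(1) k0] by simp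
    note eq1 = this
    have z: "card (subtree_chips C (w@[0])) = 0"
    proof (rule ccontr)
      assume "card (subtree_chips C (w@[0])) \<noteq> 0"
      then have "k \<le> k * card (subtree_chips C (w@[0]))" by simp
      then show False using eq1 k by linarith
    qed
    have c: "card (C w) = 1" using eq1 z by simp
    have "subtree_chips C (w@[i]) = {}" if "i < k" for i
    proof -
      have "card (subtree_chips C (w@[i])) = card (subtree_chips C (w@[0]))" using InvD(4)[OF inv] w(1) that k0 by blast
      then have "card (subtree_chips C (w@[i])) = 0" using z by simp
      then show ?thesis using Inv_finite[OF inv] by simp
    qed
    then have "(\<Union>i<k. subtree_chips C (w@[i])) = {}" by blast
    then have eq: "subtree_chips C w = C w" using decomp[OF inv w(1)] by simp
    have ne: "C w \<noteq> {}" using c by auto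
    have fin: "finite (C w)" using c card.infinite by fastforce
    have bl: "bottom_left l w = w" "bottom_right k l w = w" using len by (simp_all add: bottom_left_def bottom_right_def)
    show "Min (subtree_chips C w) \<in> C (bottom_left l w) \<and> Max (subtree_chips C w) \<in> C (bottom_right k l w)"
      using eq ne fin bl by simp
  qed
next
  case (Suc n)
  show ?case
  proof (intro allI impI)
    fix w assume w: "in_tree k w" "l - length w = Suc n" "length w \<le> l"
    have k0: "k > 0" using k by simp
    have k1: "k - 1 < k" using k0 by simp
    have fin: "finite (subtree_chips C u)" for u by (rule Inv_finite[OF inv])
    have cp: "card (subtree_chips C w) = k * k ^ n" using card_pow[OF inv st k w(1) w(3)] w(2) by simp
    have "card (C w) < k" using st unfolding stable_def by blast
    moreover have "k * k ^ n = card (C w) + k * card (subtree_chips C (w@[0]))" using card_decomp[OF inv w(1) k0] cp by simp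
    ultimately have "card (C w) = 0" using arith_aux[OF k0] by blast
    moreover have "finite (C w)"
    proof -
      have "C w \<subseteq> subtree_chips C w" using sub_mem[of _ C w] by blast
      then show ?thesis using fin finite_subset by blast
    qed
    ultimately have Ce: "C w = {}" by simp
    then have eq: "subtree_chips C w = (\<Union>i<k. subtree_chips C (w@[i]))" using decomp[OF inv w(1)] by simp
    have "card (subtree_chips C w) \<noteq> 0" using cp k0 by simp
    then have ne: "subtree_chips C w \<noteq> {}" by (intro notI) simp
    have sub0: "subtree_chips C (w@[j]) \<subseteq> subtree_chips C w" for j by (rule sub_mono) simp
    have IH: "Min (subtree_chips C w') \<in> C (bottom_left l w') \<and> Max (subtree_chips C w') \<in> C (bottom_right k l w')"
      if "w' = w @ [j]" "j < k" for w' j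
      using Suc.IH that w by simp
    define m where "m = Min (subtree_chips C w)"
    have mi: "m \<in> subtree_chips C w" using m_def ne fin Min_in by blast
    then obtain i where i: "i < k" "m \<in> subtree_chips C (w@[i])" using eq by blast
    then obtain y where y: "y \<in> subtree_chips C (w@[0])" "y \<le> m" using InvD(5)[OF inv] w(1) by blast
    have ne0: "subtree_chips C (w@[0]) \<noteq> {}" using y by blast
    have "Min (subtree_chips C (w@[0])) \<le> y" using y fin Min_le by blast
    moreover have "m \<le> Min (subtree_chips C (w@[0]))"
      using m_def Min_antimono[OF sub0 ne0 fin] by simp
    ultimately have meq: "Min (subtree_chips C w) = Min (subtree_chips C (w@[0]))" using y m_def by simp
    define M where "M = Max (subtree_chips C w)"
    have Mi: "M \<in> subtree_chips C w" using M_def ne fin Max_in by blast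
    then obtain i' where i': "i' < k" "M \<in> subtree_chips C (w@[i'])" using eq by blast
    then obtain y' where y': "y' \<in> subtree_chips C (w@[k-1])" "M \<le> y'" using InvD(6)[OF inv] w(1) by blast
    have ne1: "subtree_chips C (w@[k-1]) \<noteq> {}" using y' by blast
    have "y' \<le> Max (subtree_chips C (w@[k-1]))" using y' fin Max_ge by blast
    moreover have "Max (subtree_chips C (w@[k-1])) \<le> M"
      using M_def Max_mono[OF sub0 ne1 fin] by simp
    ultimately have Meq: "Max (subtree_chips C w) = Max (subtree_chips C (w@[k-1]))" using y' M_def by simp
    have bl: "bottom_left l (w@[0]) = bottom_left l w" "bottom_right k l (w@[k-1]) = bottom_right k l w"
      using w(2) by (simp_all add: bottom_left_def bottom_right_def)
    show "Min (subtree_chips C w) \<in> C (bottom_left l w) \<and> Max (subtree_chips C w) \<in> C (bottom_right k l w)"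
      using IH[OF refl k0] IH[OF refl k1] meq Meq bl by simp
  qed
qed

theorem lemma2p1:
  fixes k l :: nat and C :: config and v :: vertex
  assumes "k \<ge> 2" and "l \<ge> 1"
    and "(fire_step k)\<^sup>*\<^sup>* (init_config k l) C"
    and "stable k C"
    and "in_tree k v" and "length v \<le> l"
  shows "Min (subtree_chips C v) \<in> C (bottom_left l v)
       \<and> Max (subtree_chips C v) \<in> C (bottom_right k l v)"
  using min_bl[OF Inv_reach[OF assms(1,3)] assms(4,1)] assms(5,6) by blast

end
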